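(* Let $k\ge 2$, $N\ge 2$, and for $j=0,\ldots,k-1$ define the row vector $u_j\in\mathbb{R}^k$ by the generating function $$\sum_{i=0}^{k-1}u_j[i]\,x^i = \frac{(-1)^j\,|s(k,k-j)|}{k!}\,(x-1)^j\,A_{k-j}(x),$$ equivalently $u_j[i] = \frac{|s(k,k-j)|}{k!}\sum_{m=0}^{j}\binom{j}{m}(-1)^m A(k-j,i-m)$. Then $u_jT = N^{-j}u_j$ for every $j$. Moreover, if $v_j$ denotes the right eigenvector of $T$ for the eigenvalue $N^{-j}$ normalized by $v_j[0]=1$, then $\sum_{i}u_m[i]v_j[i]=\delta_{mj}$ for all $m,j\in\{0,\ldots,k-1\}$. In particular $u_0[i]=A(k,i)/k!$ and $u_{k-1}[i]=(-1)^i\binom{k-1}{i}/k$.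
   Context: Fix integers $k\ge 2$, $N\ge 2$. Let $H[c,c'] = \#\{(d_1,\ldots,d_k)\in\{0,\ldots,N-1\}^k : \lfloor (d_1+\cdots+d_k+c)/N\rfloor = c'\}$ for $c,c'\in\{0,\ldots,k-1\}$, and let $T=N^{-k}H$ (the row-stochastic Holte matrix of base-$N$ addition of $k$ summands). Its eigenvalues are $N^{-j}$, $j=0,\ldots,k-1$, all simple. $A(n,i)$ is the Eulerian number (number of permutations of $\{1,\ldots,n\}$ with exactly $i$ descents, and $0$ if $i<0$ or $i\ge n$), $A_n(x)=\sum_{i=0}^{n-1}A(n,i)x^i$ is the Eulerian polynomial, and $|s(k,m)|$ is the unsigned Stirling number of the first kind, i.e. the coefficient of $x^m$ in $x(x+1)\cdots(x+k-1)$. *)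

theory Defs
  imports Complex_Main "HOL-Combinatorics.Stirling"
begin

definition descents :: "nat list \<Rightarrow> nat" where
  "descents xs = card {j. Suc j < length xs \<and> xs ! j > xs ! Suc j}"

definition eulerian :: "nat \<Rightarrow> int \<Rightarrow> nat" where
  "eulerian n i = (if 0 \<le> i \<and> i < int n
     then card {xs. distinct xs \<and> set xs = {1..n} \<and> int (descents xs) = i}
     else 0)"

text \<open>Unsigned Stirling numbers of the first kind: library constant stirling
  (coefficients of the rising factorial, cf. lemma stirling_pochhammer).\<close>

definition holteH :: "nat \<Rightarrow> nat \<Rightarrow> nat \<Rightarrow> nat \<Rightarrow> nat" where
  "holteH k N c c' = card {ds :: nat list. length ds = k \<and> (\<forall>d\<in>set ds. d < N)
                              \<and> (sum_list ds + c) div N = c'}"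

definition holteT :: "nat \<Rightarrow> nat \<Rightarrow> nat \<Rightarrow> nat \<Rightarrow> real" where
  "holteT k N c c' = real (holteH k N c c') / real N ^ k"

definition uvec :: "nat \<Rightarrow> nat \<Rightarrow> nat \<Rightarrow> real" where
  "uvec k j i = real (stirling k (k - j)) / fact k *
     (\<Sum>m=0..j. real (j choose m) * (-1) ^ m * real (eulerian (k - j) (int i - int m)))"

end

theory Submission
  imports Defs "HOL-Computational_Algebra.Formal_Power_Series"
begin

unbundle fps_syntax


lemma descents_Nil[simp]: "descents [] = 0"
  by (simp add: descents_def)

lemma descents_Cons:
  "descents (x # xs) = descents xs + (if xs \<noteq> [] \<and> hd xs < x then 1 else 0)"
proof -
  let ?S = "\<lambda>ys. {j. Suc j < length ys \<and> ys ! j > ys ! Suc j}"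
  have eq: "?S (x # xs) = (if xs \<noteq> [] \<and> hd xs < x then {0} else {}) \<union> Suc ` ?S xs"
    apply (rule set_eqI)
    subgoal for j by (cases j) (auto simp: hd_conv_nth)
    done
  have fin: "finite (?S xs)" by (rule finite_subset[of _ "{..<length xs}"]) auto
  have "card (?S (x # xs)) = card (if xs \<noteq> [] \<and> hd xs < x then {0} else {}) + card (Suc ` ?S xs)"
    unfolding eq by (subst card_Un_disjoint) (use fin in auto)
  also have "card (Suc ` ?S xs) = card (?S xs)" by (rule card_image) auto
  finally have c: "card (?S (x # xs)) = card (if xs \<noteq> [] \<and> hd xs < x then {0::nat} else {}) + card (?S xs)" .
  have d1: "descents (x#xs) = card (?S (x#xs))" by (simp only: descents_def)
  have d2: "descents xs = card (?S xs)" by (simp only: descents_def)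
  show ?thesis unfolding d1 d2 c by simp
qed

lemma descents_append:
  "descents (xs @ ys) = descents xs + descents ys +
     (if xs \<noteq> [] \<and> ys \<noteq> [] \<and> hd ys < last xs then 1 else 0)"
proof (induction xs)
  case Nil then show ?case by simp
next
  case (Cons a xs)
  show ?case
  proof (cases "xs = []")
    case True then show ?thesis by (simp add: descents_Cons)
  next
    case False
    have "descents ((a # xs) @ ys) = descents (xs @ ys) + (if hd xs < a then 1 else 0)"
      using False by (simp add: descents_Cons)
    moreover have "descents (a # xs) = descents xs + (if hd xs < a then 1 else 0)"
      using False by (simp add: descents_Cons)
    moreover have "last (a # xs) = last xs" using False by simp
    ultimately show ?thesis using Cons.IH False by simp
  qed
qed

lemma descents_le: "descents xs \<le> length xs - 1"
proof -
  have "{j. Suc j < length xs \<and> xs ! j > xs ! Suc j} \<subseteq> {..<length xs - 1}" by auto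
  then show ?thesis unfolding descents_def by (metis card_lessThan card_mono finite_lessThan)
qed

definition perms :: "nat \<Rightarrow> nat list set" where
  "perms n = {xs. distinct xs \<and> set xs = {1..n}}"

definition E :: "nat \<Rightarrow> nat \<Rightarrow> nat" where
  "E n d = card {xs \<in> perms n. descents xs = d}"

lemma perms_length: "xs \<in> perms n \<Longrightarrow> length xs = n"
proof -
  assume "xs \<in> perms n"
  then have "distinct xs" "set xs = {1..n}" by (auto simp: perms_def)
  then have "length xs = card {1..n}" using distinct_card by metis
  then show ?thesis by simp
qed

lemma finite_perms: "finite (perms n)"
proof (rule finite_subset)
  show "perms n \<subseteq> {xs. set xs \<subseteq> {1..n} \<and> length xs = n}"
  proof
    fix xs assume "xs \<in> perms n"
    then show "xs \<in> {xs. set xs \<subseteq> {1..n} \<and> length xs = n}"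
      using perms_length[of xs n] by (simp add: perms_def)
  qed
  show "finite {xs. set xs \<subseteq> {1..n} \<and> length xs = n}" by (rule finite_lists_length_eq) simp
qed

lemma E_0: "E 0 d = (if d = 0 then 1 else 0)"
proof -
  have p: "xs \<in> perms 0 \<longleftrightarrow> xs = []" for xs by (cases xs) (simp_all add: perms_def)
  have "{xs \<in> perms 0. descents xs = d} = {xs. xs = [] \<and> descents xs = d}"
    using p by blast
  also have "\<dots> = (if d = 0 then {[]} else {})"
    by (cases "d = 0") auto
  finally have "{xs \<in> perms 0. descents xs = d} = (if d = 0 then {[]} else {})" .
  then show ?thesis unfolding E_def by simp
qed

lemma eulerian_E: "n \<ge> 1 \<Longrightarrow> eulerian n (int d) = E n d"
proof -
  assume n: "n \<ge> 1"
  show ?thesis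
  proof (cases "d < n")
    case True then show ?thesis by (simp add: eulerian_def E_def perms_def)
  next
    case False
    have "descents xs < n" if "xs \<in> perms n" for xs
      using descents_le[of xs] perms_length[OF that] n by linarith
    then have e: "{xs \<in> perms n. descents xs = d} = {}"
      using False by force
    show ?thesis unfolding E_def e using False by (simp add: eulerian_def)
  qed
qed

lemma eulerian_neg: "i < 0 \<Longrightarrow> eulerian n i = 0"
  by (simp add: eulerian_def)

lemma last_take_nth:
  assumes "0 < p" "p \<le> length ys" shows "last (take p ys) = ys ! (p - 1)"
proof -
  have "take p ys \<noteq> []" using assms by auto
  then have "last (take p ys) = take p ys ! (length (take p ys) - 1)" by (rule last_conv_nth)
  also have "\<dots> = ys ! (p - 1)" using assms by (simp add: min_def)
  finally show ?thesis .
qed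

lemma descents_ins:
  assumes "\<forall>y\<in>set ys. y < x" "p \<le> length ys"
  shows "descents (take p ys @ x # drop p ys) =
         descents ys + (if p < length ys \<and> \<not> (0 < p \<and> ys ! p < ys ! (p - 1)) then 1 else 0)"
proof -
  let ?L = "take p ys" and ?R = "drop p ys"
  have L: "?L \<noteq> [] \<longleftrightarrow> 0 < p" using assms(2) by auto
  have R: "?R \<noteq> [] \<longleftrightarrow> p < length ys" using assms(2) by auto
  have lastL: "?L \<noteq> [] \<Longrightarrow> last ?L < x"
    using assms(1) by (metis last_in_set in_set_takeD)
  have hdR: "?R \<noteq> [] \<Longrightarrow> hd ?R < x"
    using assms(1) by (metis hd_in_set in_set_dropD)
  have d1: "descents (?L @ x # ?R) = descents ?L + descents ?R + (if ?R \<noteq> [] then 1 else 0)"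
    using lastL hdR by (auto simp: descents_append descents_Cons)
  have d2: "descents ys = descents ?L + descents ?R +
      (if ?L \<noteq> [] \<and> ?R \<noteq> [] \<and> hd ?R < last ?L then 1 else 0)"
    using descents_append[of ?L ?R] by simp
  have e: "?L \<noteq> [] \<and> ?R \<noteq> [] \<Longrightarrow> (hd ?R < last ?L) = (ys ! p < ys ! (p - 1))"
    using L R assms(2) by (simp add: hd_drop_conv_nth last_take_nth)
  show ?thesis
    using d1 d2 e L R by auto
qed

definition ins :: "nat \<Rightarrow> nat list \<times> nat \<Rightarrow> nat list" where
  "ins x = (\<lambda>(ys, p). take p ys @ x # drop p ys)"

lemma ins_inj: "inj_on (ins (Suc n)) (perms n \<times> {..n})"
proof (rule inj_onI)
  fix a b assume a: "a \<in> perms n \<times> {..n}" and b: "b \<in> perms n \<times> {..n}"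
    and eq: "ins (Suc n) a = ins (Suc n) b"
  obtain ys p where a': "a = (ys, p)" by (cases a)
  obtain ys' p' where b': "b = (ys', p')" by (cases b)
  have sy: "set ys = {1..n}" and ly: "length ys = n" and p: "p \<le> n"
    using a a' perms_length by (auto simp: perms_def)
  have ly': "length ys' = n" and p': "p' \<le> n"
    using b b' perms_length by (auto simp: perms_def)
  have "Suc n \<notin> set (take p ys)" "Suc n \<notin> set (drop p ys)"
    using sy by (auto dest: in_set_takeD in_set_dropD)
  moreover have "take p ys @ Suc n # drop p ys = take p' ys' @ Suc n # drop p' ys'"
    using eq a' b' by (simp add: ins_def)
  ultimately have "take p ys = take p' ys' \<and> drop p ys = drop p' ys'"
    using append_Cons_eq_iff by metis
  then have "ys = ys'" and "length (take p ys) = length (take p' ys')"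
    by (metis append_take_drop_id, metis)
  then show "a = b" using a' b' ly ly' p p' by simp
qed

lemma ins_image: "ins (Suc n) ` (perms n \<times> {..n}) = perms (Suc n)"
proof
  show "ins (Suc n) ` (perms n \<times> {..n}) \<subseteq> perms (Suc n)"
  proof
    fix xs assume "xs \<in> ins (Suc n) ` (perms n \<times> {..n})"
    then obtain ys p where ys: "ys \<in> perms n" and p: "p \<le> n" and xs: "xs = take p ys @ Suc n # drop p ys"
      by (auto simp: ins_def)
    have d: "distinct ys" and sy: "set ys = {1..n}" using ys by (auto simp: perms_def)
    have nin: "Suc n \<notin> set ys" using sy by auto
    have d1: "distinct (take p ys)" "distinct (drop p ys)"
      "set (take p ys) \<inter> set (drop p ys) = {}"
      using d by (simp_all add: set_take_disj_set_drop_if_distinct)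
    have n1: "Suc n \<notin> set (take p ys)" "Suc n \<notin> set (drop p ys)"
      using nin by (meson in_set_takeD, meson in_set_dropD)
    have "distinct xs" unfolding xs using d1 n1 by (simp only: distinct_append distinct.simps set_simps) blast
    moreover have "set xs = insert (Suc n) (set ys)"
      using xs by (metis Un_insert_right append_take_drop_id set_append list.simps(15))
    then have "set xs = {1..Suc n}" using sy by (simp add: atLeastAtMostSuc_conv)
    ultimately show "xs \<in> perms (Suc n)" by (simp add: perms_def)
  qed
next
  show "perms (Suc n) \<subseteq> ins (Suc n) ` (perms n \<times> {..n})"
  proof
    fix xs assume xs: "xs \<in> perms (Suc n)"
    then have d: "distinct xs" and sx: "set xs = {1..Suc n}" by (auto simp: perms_def)
    then have "Suc n \<in> set xs" by simp
    then obtain L R where LR: "xs = L @ Suc n # R" by (metis split_list)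
    have nL: "Suc n \<notin> set L" and nR: "Suc n \<notin> set R" using d LR by simp_all
    have "distinct (L @ R)" using d LR by simp
    moreover have "set (L @ R) = {1..n}"
    proof -
      have "set xs = set L \<union> insert (Suc n) (set R)" using LR by simp
      then have e1: "set L \<union> insert (Suc n) (set R) = {1..Suc n}" using sx by simp
      have "set (L @ R) = (set L \<union> insert (Suc n) (set R)) - {Suc n}" using nL nR unfolding set_append by blast
      also have "\<dots> = {1..Suc n} - {Suc n}" by (simp only: e1)
      also have "\<dots> = {1..n}" by auto
      finally show ?thesis .
    qed
    ultimately have ys: "L @ R \<in> perms n" by (simp add: perms_def)
    then have "length L \<le> n" using perms_length[OF ys] by simp
    moreover have "ins (Suc n) (L @ R, length L) = xs" using LR by (simp add: ins_def)
    ultimately show "xs \<in> ins (Suc n) ` (perms n \<times> {..n})" using ys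
      by (metis SigmaI atMost_iff image_eqI)
  qed
qed

lemma count_ins:
  assumes ys: "ys \<in> perms n"
  shows "real (card {p \<in> {..n}. descents (ins (Suc n) (ys, p)) = d}) =
    (if descents ys = d then real (descents ys) + 1 else 0) +
    (if descents ys + 1 = d then real n - real (descents ys) else 0)"
proof -
  have ly: "length ys = n" using perms_length[OF ys] .
  have lt: "\<forall>y\<in>set ys. y < Suc n" using ys by (auto simp: perms_def)
  define P where "P p = (p < n \<and> \<not> (0 < p \<and> ys ! p < ys ! (p - 1)))" for p
  have dins: "descents (ins (Suc n) (ys, p)) = descents ys + (if P p then 1 else 0)" if "p \<le> n" for p
    using descents_ins[OF lt, of p] that ly by (simp add: ins_def P_def)
  define D where "D = {j. Suc j < n \<and> ys ! Suc j < ys ! j}"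
  have desD: "descents ys = card D" unfolding D_def descents_def ly by simp
  have finD: "finite D" unfolding D_def by (rule finite_subset[of _ "{..<n}"]) auto
  define Z where "Z = {p \<in> {..n}. \<not> P p}"
  have Zeq: "Z = insert n (Suc ` D)"
  proof (rule set_eqI)
    fix p show "p \<in> Z \<longleftrightarrow> p \<in> insert n (Suc ` D)"
    proof (cases p)
      case 0 then show ?thesis by (auto simp: Z_def P_def D_def)
    next
      case (Suc q) then show ?thesis by (auto simp: Z_def P_def D_def)
    qed
  qed
  have "n \<notin> Suc ` D" unfolding D_def by auto
  then have cZ: "card Z = Suc (descents ys)"
    unfolding Zeq desD using finD by (simp add: card_image)
  have ZS: "Z \<subseteq> {..n}" unfolding Z_def by auto
  have cC: "card ({..n} - Z) = n - descents ys"
    using card_Diff_subset[OF finite_subset[OF ZS] ZS] cZ by simp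
  have dle: "descents ys \<le> n" using cZ card_mono[OF _ ZS] by simp
  show ?thesis
  proof (cases "descents ys = d")
    case True
    have "{p \<in> {..n}. descents (ins (Suc n) (ys, p)) = d} = Z"
      using dins True unfolding Z_def by auto
    then show ?thesis using True cZ by simp
  next
    case F1: False
    show ?thesis
    proof (cases "descents ys + 1 = d")
      case True
      have "{p \<in> {..n}. descents (ins (Suc n) (ys, p)) = d} = {..n} - Z"
        using dins True unfolding Z_def by auto
      then show ?thesis using True cC dle F1 by (simp add: of_nat_diff)
    next
      case False
      have "{p \<in> {..n}. descents (ins (Suc n) (ys, p)) = d} = {}"
        using dins False F1 by auto
      then show ?thesis using False F1 by simp
    qed
  qed
qed

lemma sum_if_card:
  assumes "finite A"
  shows "(\<Sum>x\<in>A. if P x then (c::real) else 0) = c * real (card {x \<in> A. P x})"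
proof -
  have "(\<Sum>x\<in>A. if P x then c else 0) = (\<Sum>x\<in>{x \<in> A. P x}. c)"
    using assms by (subst sum.inter_filter) auto
  then show ?thesis by (simp add: mult.commute)
qed

lemma E_rec:
  "real (E (Suc n) d) = (real d + 1) * real (E n d) +
     (if d = 0 then 0 else (real n + 1 - real d) * real (E n (d - 1)))"
proof -
  let ?f = "ins (Suc n)"
  let ?A = "{a \<in> perms n \<times> {..n}. descents (?f a) = d}"
  have "{xs \<in> perms (Suc n). descents xs = d} = ?f ` ?A"
    using ins_image[of n] by auto
  then have "E (Suc n) d = card (?f ` ?A)" by (simp add: E_def)
  also have "\<dots> = card ?A"
    by (rule card_image) (rule inj_on_subset[OF ins_inj], auto)
  also have "?A = Sigma (perms n) (\<lambda>ys. {p \<in> {..n}. descents (?f (ys, p)) = d})" by auto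
  also have "card \<dots> = (\<Sum>ys\<in>perms n. card {p \<in> {..n}. descents (?f (ys, p)) = d})"
    by (rule card_SigmaI) (auto simp: finite_perms)
  finally have "real (E (Suc n) d) = (\<Sum>ys\<in>perms n. real (card {p \<in> {..n}. descents (?f (ys, p)) = d}))"
    by simp
  also have "\<dots> = (\<Sum>ys\<in>perms n. (if descents ys = d then real d + 1 else 0) +
      (if descents ys = d - 1 \<and> d \<noteq> 0 then real n + 1 - real d else 0))"
  proof (rule sum.cong)
    fix ys assume ys: "ys \<in> perms n"
    have "(if descents ys = d then real (descents ys) + 1 else 0) +
      (if descents ys + 1 = d then real n - real (descents ys) else 0) =
      (if descents ys = d then real d + 1 else 0) +
      (if descents ys = d - 1 \<and> d \<noteq> 0 then real n + 1 - real d else 0)"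
      by (cases "descents ys = d"; cases "descents ys + 1 = d") auto
    then show "real (card {p \<in> {..n}. descents (?f (ys, p)) = d}) =
      (if descents ys = d then real d + 1 else 0) +
      (if descents ys = d - 1 \<and> d \<noteq> 0 then real n + 1 - real d else 0)"
      using count_ins[OF ys, of d] by simp
  qed simp
  also have "\<dots> = (real d + 1) * real (E n d) +
     (real n + 1 - real d) * real (card {ys \<in> perms n. descents ys = d - 1 \<and> d \<noteq> 0})"
    by (simp add: sum.distrib sum_if_card finite_perms E_def)
  also have "\<dots> = (real d + 1) * real (E n d) +
     (if d = 0 then 0 else (real n + 1 - real d) * real (E n (d - 1)))"
    by (cases "d = 0") (simp_all add: E_def)
  finally show ?thesis .
qed





definition Gf :: "nat \<Rightarrow> real fps" where "Gf n = Abs_fps (\<lambda>i. real (E n i))"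
definition Ff :: "nat \<Rightarrow> real fps" where "Ff n = Abs_fps (\<lambda>m. real (m + 1) ^ n)"
definition Lop :: "nat \<Rightarrow> real fps \<Rightarrow> real fps" where
  "Lop n g = g + fps_const (real n) * (fps_X * g) + fps_X * fps_deriv g - fps_X * (fps_X * fps_deriv g)"

lemma Gf_rec: "Gf (Suc n) = Lop n (Gf n)"
proof (rule fps_ext)
  fix i
  show "Gf (Suc n) $ i = Lop n (Gf n) $ i"
  proof (cases i)
    case 0
    then show ?thesis using E_rec[of n 0] by (simp add: Gf_def Lop_def)
  next
    case (Suc q)
    have "Lop n (Gf n) $ i = real (E n (Suc q)) + real n * real (E n q) + real (Suc q) * real (E n (Suc q))
       - (if q = 0 then 0 else real q * real (E n q))"
      using Suc by (simp add: Gf_def Lop_def)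
    also have "\<dots> = real (E (Suc n) i)"
      using E_rec[of n i] Suc by (cases "q = 0") (simp_all add: algebra_simps)
    finally show ?thesis by (simp add: Gf_def)
  qed
qed

lemma Ff_Suc: "Ff (Suc n) = fps_deriv (fps_X * Ff n)"
  by (rule fps_ext) (simp add: Ff_def algebra_simps)

lemma ring_aux:
  fixes x y f f' a :: "'a::comm_ring_1"
  shows "(1-x)*(1-x)*y*(f + x*f') = (1-x)*y*f + a*(x*((1-x)*y*f)) + x*((1-x)*y*f' + (-(a+1)*y)*f)
          - x*(x*((1-x)*y*f' + (-(a+1)*y)*f))"
  by (simp add: algebra_simps)

lemma Ff_rec: "(1 - fps_X) ^ Suc (Suc n) * Ff (Suc n) = Lop n ((1 - fps_X) ^ Suc n * Ff n)"
proof -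
  define Y where "Y = (1 - fps_X :: real fps) ^ n"
  define F where "F = Ff n"
  define a where "a = fps_const (real n)"
  have dY: "fps_deriv ((1 - fps_X :: real fps) ^ Suc n) = - (a + 1) * Y"
  proof -
    have "fps_deriv ((1 - fps_X :: real fps) ^ Suc n) = of_nat (Suc n) * fps_deriv (1 - fps_X) * (1 - fps_X) ^ (Suc n - 1)"
      by (rule fps_deriv_power')
    also have "of_nat (Suc n) = a + (1 :: real fps)" unfolding a_def by (simp add: fps_of_nat[symmetric] fps_const_add[symmetric])
    finally show ?thesis unfolding Y_def by simp
  qed
  have dP: "fps_deriv ((1 - fps_X)^Suc n * F) = (1 - fps_X)^Suc n * fps_deriv F + (- (a + 1) * Y) * F"
    by (simp only: fps_deriv_mult dY)
  have S: "(1 - fps_X :: real fps) ^ Suc n = (1 - fps_X) * Y" unfolding Y_def by simp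
  have "(1 - fps_X) ^ Suc (Suc n) * Ff (Suc n) = (1 - fps_X) * (1 - fps_X) * Y * (F + fps_X * fps_deriv F)"
    unfolding Ff_Suc Y_def F_def by (simp add: algebra_simps)
  also have "\<dots> = Lop n ((1 - fps_X) ^ Suc n * F)"
    unfolding Lop_def a_def[symmetric] dP unfolding S by (rule ring_aux)
  finally show ?thesis by (simp add: F_def)
qed

lemma Gf_closed: "Gf n = (1 - fps_X) ^ Suc n * Ff n"
proof (induction n)
  case 0
  show ?case
  proof (rule fps_ext)
    fix i show "Gf 0 $ i = ((1 - fps_X) ^ Suc 0 * Ff 0) $ i"
      by (cases i) (simp_all add: Gf_def Ff_def E_0 algebra_simps)
  qed
next
  case (Suc n)
  then show ?case by (simp only: Gf_rec Ff_rec)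
qed





lemma one_minus_XN_pow:
  "(1 - fps_X ^ N :: real fps) ^ k = (\<Sum>i\<le>k. fps_const ((-1)^i * real (k choose i)) * fps_X ^ (N*i))"
proof -
  have "(1 - fps_X ^ N :: real fps) ^ k = (- (fps_X ^ N) + 1) ^ k" by simp
  also have "\<dots> = (\<Sum>i\<le>k. of_nat (k choose i) * (- (fps_X ^ N)) ^ i * 1 ^ (k - i))"
    by (rule binomial_ring)
  also have "\<dots> = (\<Sum>i\<le>k. fps_const ((-1)^i * real (k choose i)) * fps_X ^ (N*i))"
  proof (rule sum.cong)
    fix i
    have c: "fps_const ((-1::real)^i) = (-1)^i"
      by (simp only: fps_const_neg [symmetric] fps_const_power [symmetric] fps_const_1_eq_1)
    have "(- (fps_X ^ N :: real fps)) ^ i = fps_const ((-1)^i) * fps_X ^ (N*i)"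
      unfolding c by (simp add: power_minus[of "fps_X ^ N"] power_mult)
    then show "of_nat (k choose i) * (- (fps_X ^ N :: real fps)) ^ i * 1 ^ (k - i) =
        fps_const ((-1)^i * real (k choose i)) * fps_X ^ (N*i)"
      by (simp only: fps_const_mult[symmetric] fps_of_nat power_one mult_1_right mult_1_left mult_ac)
  qed simp
  finally show ?thesis .
qed

lemma coeff_XN:
  "((1 - fps_X ^ N :: real fps) ^ k * g) $ t =
     (\<Sum>i\<le>k. (-1)^i * real (k choose i) * (if N*i \<le> t then g $ (t - N*i) else 0))"
  unfolding one_minus_XN_pow sum_distrib_right fps_sum_nth
  by (rule sum.cong) (simp_all add: mult.assoc fps_X_power_mult_nth not_less)

definition Wf :: "nat \<Rightarrow> nat \<Rightarrow> nat \<Rightarrow> nat \<Rightarrow> real" where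
  "Wf N k e t = (\<Sum>i\<le>k. (-1)^i * real (k choose i) * real (t - N*i) ^ e)"

lemma coeff_W:
  assumes "e \<ge> 1"
  shows "(fps_X * ((1 - fps_X ^ N) ^ k * Ff e)) $ t = Wf N k e t"
proof -
  have h: "(if N*i \<le> t then (fps_X * Ff e) $ (t - N*i) else 0) = real (t - N*i) ^ e" for i
    using assms by (auto simp: Ff_def)
  have "fps_X * ((1 - fps_X ^ N) ^ k * Ff e) = (1 - fps_X ^ N) ^ k * (fps_X * Ff e)"
    by (simp only: mult_ac)
  then have "(fps_X * ((1 - fps_X ^ N) ^ k * Ff e)) $ t = ((1 - fps_X ^ N) ^ k * (fps_X * Ff e)) $ t"
    by (simp only:)
  also have "\<dots> = (\<Sum>i\<le>k. (-1)^i * real (k choose i) * (if N*i \<le> t then (fps_X * Ff e) $ (t - N*i) else 0))"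
    by (rule coeff_XN)
  also have "\<dots> = Wf N k e t" unfolding Wf_def h ..
  finally show ?thesis .
qed

lemma W_scale: "Wf N k e (n*N) = real N ^ e * Wf 1 k e n"
proof -
  have "real (n*N - N*i) ^ e = real N ^ e * real (n - i) ^ e" for i
  proof -
    have "n*N - N*i = N * (n - i)" by (simp add: diff_mult_distrib2 mult.commute)
    then show ?thesis by (simp add: power_mult_distrib)
  qed
  then show ?thesis unfolding Wf_def by (simp add: sum_distrib_left mult_ac)
qed

lemma coeff_diffX: "((1 - fps_X) * (Q :: real fps)) $ t = (fps_X * Q) $ Suc t - (fps_X * Q) $ t"
  by (simp add: left_diff_distrib)





lemma card_partition_fun:
  assumes "finite A" "finite S" "\<forall>x\<in>A. f x \<in> S"
  shows "card A = (\<Sum>s\<in>S. card {x \<in> A. f x = s})"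
proof -
  have "A = (\<Union>s\<in>S. {x \<in> A. f x = s})" using assms(3) by auto
  then have "card A = card (\<Union>s\<in>S. {x \<in> A. f x = s})" by simp
  also have "\<dots> = (\<Sum>s\<in>S. card {x \<in> A. f x = s})"
    by (rule card_UN_disjoint) (use assms in auto)
  finally show ?thesis .
qed

definition Lset :: "nat \<Rightarrow> nat \<Rightarrow> nat \<Rightarrow> nat list set" where
  "Lset k N s = {ds. length ds = k \<and> (\<forall>d\<in>set ds. d < N) \<and> sum_list ds = s}"

definition Dg :: "nat \<Rightarrow> real fps" where "Dg N = (\<Sum>d<N. fps_X ^ d)"

lemma finite_Lset: "finite (Lset k N s)"
proof (rule finite_subset)
  show "Lset k N s \<subseteq> {xs. set xs \<subseteq> {..<N} \<and> length xs = k}" by (auto simp: Lset_def)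
  show "finite {xs. set xs \<subseteq> {..<N} \<and> length xs = k}" by (rule finite_lists_length_eq) simp
qed

lemma Lset_Suc_hd:
  "{xs \<in> Lset (Suc k) N s. hd xs = d} = (if d < N \<and> d \<le> s then Cons d ` Lset k N (s - d) else {})"
proof (rule set_eqI)
  fix xs
  show "xs \<in> {xs \<in> Lset (Suc k) N s. hd xs = d} \<longleftrightarrow>
        xs \<in> (if d < N \<and> d \<le> s then Cons d ` Lset k N (s - d) else {})"
  proof
    assume "xs \<in> {xs \<in> Lset (Suc k) N s. hd xs = d}"
    then obtain ds where xs: "xs = d # ds" and l: "length ds = k" and a: "d < N" "\<forall>x\<in>set ds. x < N"
      and sm: "d + sum_list ds = s"
      by (auto simp: Lset_def length_Suc_conv)
    then show "xs \<in> (if d < N \<and> d \<le> s then Cons d ` Lset k N (s - d) else {})"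
      by (auto simp: Lset_def)
  next
    assume "xs \<in> (if d < N \<and> d \<le> s then Cons d ` Lset k N (s - d) else {})"
    then show "xs \<in> {xs \<in> Lset (Suc k) N s. hd xs = d}"
      by (auto simp: Lset_def split: if_splits)
  qed
qed

lemma cnt_fps: "real (card (Lset k N s)) = (Dg N ^ k) $ s"
proof (induction k arbitrary: s)
  case 0
  have "Lset 0 N s = (if s = 0 then {[]} else {})" by (auto simp: Lset_def)
  then show ?case by simp
next
  case (Suc k)
  have "card (Lset (Suc k) N s) = (\<Sum>d<N. card {xs \<in> Lset (Suc k) N s. hd xs = d})"
    by (rule card_partition_fun) (use finite_Lset[of "Suc k" N s] in \<open>auto simp: Lset_def length_Suc_conv\<close>)
  also have "\<dots> = (\<Sum>d<N. if d \<le> s then card (Lset k N (s - d)) else 0)"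
    by (rule sum.cong) (auto simp: Lset_Suc_hd card_image)
  finally have "real (card (Lset (Suc k) N s)) = (\<Sum>d<N. if d \<le> s then (Dg N ^ k) $ (s - d) else 0)"
    by (simp add: Suc.IH if_distrib[of real] cong: if_cong)
  also have "\<dots> = (Dg N ^ Suc k) $ s"
  proof -
    have "Dg N ^ Suc k = (\<Sum>d<N. fps_X ^ d) * Dg N ^ k" by (simp add: Dg_def)
    then have "(Dg N ^ Suc k) $ s = (\<Sum>d<N. (fps_X ^ d * Dg N ^ k) $ s)"
      by (simp only: sum_distrib_right fps_sum_nth)
    also have "\<dots> = (\<Sum>d<N. if d \<le> s then (Dg N ^ k) $ (s - d) else 0)"
      by (rule sum.cong) (simp_all add: fps_X_power_mult_nth not_less)
    finally show ?thesis by simp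
  qed
  finally show ?case .
qed

lemma sum_list_bound: "\<forall>d\<in>set ds. d < N \<Longrightarrow> sum_list ds \<le> length ds * (N - 1)"
  by (induction ds) auto

lemma holteH_sum:
  assumes "k \<ge> 1" "N \<ge> 1"
  shows "holteH k N c c' = (\<Sum>s<k*N. if (s + c) div N = c' then card (Lset k N s) else 0)"
proof -
  let ?A = "{ds :: nat list. length ds = k \<and> (\<forall>d\<in>set ds. d < N) \<and> (sum_list ds + c) div N = c'}"
  have fin: "finite ?A"
  proof (rule finite_subset)
    show "?A \<subseteq> {xs. set xs \<subseteq> {..<N} \<and> length xs = k}" by auto
    show "finite {xs. set xs \<subseteq> {..<N} \<and> length xs = k}" by (rule finite_lists_length_eq) simp
  qed
  have lt: "sum_list ds < k * N" if "length ds = k" "\<forall>d\<in>set ds. d < N" for ds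
  proof -
    have "sum_list ds \<le> k * (N - 1)" using sum_list_bound[OF that(2)] that(1) by simp
    also have "\<dots> < k * N" using assms by simp
    finally show ?thesis .
  qed
  have "holteH k N c c' = (\<Sum>s<k*N. card {ds \<in> ?A. sum_list ds = s})"
    unfolding holteH_def by (rule card_partition_fun) (use fin lt in auto)
  also have "\<dots> = (\<Sum>s<k*N. if (s + c) div N = c' then card (Lset k N s) else 0)"
  proof (rule sum.cong)
    fix s
    show "card {ds \<in> ?A. sum_list ds = s} = (if (s + c) div N = c' then card (Lset k N s) else 0)"
    proof (cases "(s + c) div N = c'")
      case True
      then have "{ds \<in> ?A. sum_list ds = s} = Lset k N s" by (auto simp: Lset_def)
      then show ?thesis using True by simp
    next
      case False
      then have e: "{ds \<in> ?A. sum_list ds = s} = {}" by auto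
      show ?thesis unfolding e using False by simp
    qed
  qed simp
  finally show ?thesis .
qed

lemma conv_sum:
  fixes f g :: "real fps"
  assumes f0: "\<forall>c\<ge>a. f $ c = 0" and g0: "\<forall>s\<ge>b. g $ s = 0"
  shows "(\<Sum>c<a. \<Sum>s<b. f $ c * g $ s * \<phi> (c + s)) = (\<Sum>t<a+b. (f * g) $ t * \<phi> t)"
proof -
  let ?h = "\<lambda>i j. f $ i * g $ j * \<phi> (i + j)"
  have "(\<Sum>t<a+b. (f * g) $ t * \<phi> t) = (\<Sum>t<a+b. \<Sum>i\<le>t. ?h i (t - i))"
  proof (rule sum.cong)
    fix t
    have "(f * g) $ t * \<phi> t = (\<Sum>i\<le>t. f $ i * g $ (t - i) * \<phi> t)"
      by (simp add: fps_mult_nth atLeast0AtMost sum_distrib_right)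
    also have "\<dots> = (\<Sum>i\<le>t. ?h i (t - i))" by (rule sum.cong) auto
    finally show "(f * g) $ t * \<phi> t = (\<Sum>i\<le>t. ?h i (t - i))" .
  qed simp
  also have "\<dots> = (\<Sum>(i,j)\<in>{(i,j). i+j < a+b}. ?h i j)"
    by (rule sum.triangle_reindex[symmetric])
  finally have R: "(\<Sum>t<a+b. (f * g) $ t * \<phi> t) = (\<Sum>(i,j)\<in>{(i,j). i+j < a+b}. ?h i j)" .
  have L: "(\<Sum>c<a. \<Sum>s<b. ?h c s) = (\<Sum>(i,j)\<in>{..<a} \<times> {..<b}. ?h i j)"
    by (simp add: sum.cartesian_product)
  have finT: "finite {(i::nat,j::nat). i+j < a+b}"
    by (rule finite_subset[of _ "{..<a+b} \<times> {..<a+b}"]) auto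
  have "(\<Sum>(i,j)\<in>{..<a} \<times> {..<b}. ?h i j) = (\<Sum>(i,j)\<in>{(i,j). i+j < a+b}. ?h i j)"
  proof (rule sum.mono_neutral_left)
    show "finite {(i::nat,j::nat). i+j < a+b}" by (rule finT)
    show "{..<a} \<times> {..<b} \<subseteq> {(i,j). i+j < a+b}" by auto
    show "\<forall>x\<in>{(i,j). i+j < a+b} - {..<a} \<times> {..<b}. (case x of (i,j) \<Rightarrow> ?h i j) = 0"
    proof
      fix x assume x: "x \<in> {(i,j). i+j < a+b} - {..<a} \<times> {..<b}"
      obtain i j where ij: "x = (i,j)" by (cases x)
      have "\<not> i < a \<or> \<not> j < b" using x ij by auto
      then have "f $ i = 0 \<or> g $ j = 0" using f0 g0 by (meson not_less)
      then show "(case x of (i,j) \<Rightarrow> ?h i j) = 0" using ij by auto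
    qed
  qed
  then show ?thesis using L R by simp
qed





lemma coeff_1mX: "((1 - fps_X) ^ j :: real fps) $ m = (-1)^m * real (j choose m)"
proof -
  have "((1 - fps_X ^ 1) ^ j * 1 :: real fps) $ m =
     (\<Sum>i\<le>j. (-1)^i * real (j choose i) * (if 1*i \<le> m then (1::real fps) $ (m - 1*i) else 0))"
    by (rule coeff_XN)
  also have "\<dots> = (\<Sum>i\<le>j. if i = m then (-1)^i * real (j choose i) else 0)"
    by (rule sum.cong) auto
  also have "\<dots> = (-1)^m * real (j choose m)"
    by (simp add: sum.delta)
  finally show ?thesis by simp
qed

lemma E_zero: "1 \<le> n \<Longrightarrow> n \<le> d \<Longrightarrow> E n d = 0"
  using eulerian_E[of n d] by (simp add: eulerian_def)

definition Pf :: "nat \<Rightarrow> nat \<Rightarrow> real fps" where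
  "Pf k j = (1 - fps_X) ^ Suc k * Ff (k - j)"

lemma Pf_coeff:
  assumes "j < k"
  shows "Pf k j $ c = (\<Sum>m\<le>c. (-1)^m * real (j choose m) * real (E (k - j) (c - m)))"
proof -
  have "Pf k j = (1 - fps_X) ^ j * Gf (k - j)"
    using assms unfolding Pf_def Gf_closed by (simp add: power_add[symmetric] mult.assoc)
  then show ?thesis
    by (simp add: fps_mult_nth atLeast0AtMost coeff_1mX Gf_def)
qed

lemma Pf_zero:
  assumes "j < k" "k \<le> c"
  shows "Pf k j $ c = 0"
proof -
  have "(-1)^m * real (j choose m) * real (E (k - j) (c - m)) = 0" for m
  proof (cases "m \<le> j")
    case True
    then have "E (k - j) (c - m) = 0" using assms by (intro E_zero) auto
    then show ?thesis by simp
  next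
    case False
    then show ?thesis by simp
  qed
  then show ?thesis using assms by (simp only: Pf_coeff) simp
qed

lemma uvec_Pf:
  assumes "j < k"
  shows "uvec k j c = real (stirling k (k - j)) / fact k * Pf k j $ c"
proof -
  let ?e = "k - j"
  have e1: "1 \<le> ?e" using assms by simp
  have eul: "real (eulerian ?e (int c - int m)) = (if m \<le> c then real (E ?e (c - m)) else 0)" for m
  proof (cases "m \<le> c")
    case True
    then have "int c - int m = int (c - m)" by simp
    then show ?thesis using True eulerian_E[OF e1, of "c - m"] by (simp only: if_True)
  next
    case False
    then show ?thesis by (simp add: eulerian_def)
  qed
  define g where "g m = (if m \<le> c then (-1)^m * real (j choose m) * real (E ?e (c - m)) else 0)" for m
  have "(\<Sum>m=0..j. real (j choose m) * (-1) ^ m * real (eulerian ?e (int c - int m))) = (\<Sum>m=0..j. g m)"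
    by (rule sum.cong) (auto simp: eul g_def)
  also have "\<dots> = (\<Sum>m=0..c+j. g m)"
    by (rule sum.mono_neutral_left) (auto simp: g_def)
  also have "\<dots> = (\<Sum>m=0..c. g m)"
    by (rule sum.mono_neutral_right) (auto simp: g_def)
  also have "\<dots> = Pf k j $ c"
    unfolding Pf_coeff[OF assms] atLeast0AtMost by (rule sum.cong) (auto simp: g_def)
  finally show ?thesis unfolding uvec_def by simp
qed





lemma div_window:
  assumes "(N::nat) > 0"
  shows "t div N = c' \<longleftrightarrow> c' * N \<le> t \<and> t < c' * N + N"
proof
  assume "t div N = c'"
  then show "c' * N \<le> t \<and> t < c' * N + N"
    using assms by (metis div_times_less_eq_dividend dividend_less_div_times mult.commute add.commute)
next
  assume "c' * N \<le> t \<and> t < c' * N + N"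
  then show "t div N = c'"
    using assms by (metis add.commute div_nat_eqI mult.commute mult_Suc_right)
qed

lemma Lset_empty:
  assumes "k * N \<le> s" "k \<ge> 1"
  shows "Lset k N s = {}"
proof -
  have "sum_list ds < k * N" if "length ds = k" "\<forall>d\<in>set ds. d < N" for ds
  proof -
    have N: "N \<ge> 1" using that assms by (cases ds) auto
    have "sum_list ds \<le> k * (N - 1)" using sum_list_bound[OF that(2)] that(1) by simp
    also have "\<dots> < k * N" using assms N by simp
    finally show ?thesis .
  qed
  then show ?thesis using assms(1) unfolding Lset_def by fastforce
qed

lemma left_eigen:
  assumes k2: "k \<ge> 2" and N2: "N \<ge> 2" and jk: "j < k" and ck: "c' < k"
  shows "(\<Sum>c<k. uvec k j c * holteT k N c c') = uvec k j c' / real N ^ j"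
proof -
  define e where "e = k - j"
  have e1: "e \<ge> 1" using jk by (simp add: e_def)
  define sj where "sj = real (stirling k (k - j)) / fact k"
  define P where "P = Pf k j"
  define Dk where "Dk = Dg N ^ k"
  define \<phi> where "\<phi> t = (if t div N = c' then 1 else 0 :: real)" for t
  have N0: "N > 0" using N2 by simp
  have hT: "holteT k N c c' = (\<Sum>s<k*N. Dk $ s * \<phi> (c + s)) / real N ^ k" for c
  proof -
    have "real (holteH k N c c') = (\<Sum>s<k*N. if (s + c) div N = c' then real (card (Lset k N s)) else 0)"
      using holteH_sum[of k N c c'] k2 N2 by (simp add: if_distrib[of real] cong: if_cong)
    also have "\<dots> = (\<Sum>s<k*N. Dk $ s * \<phi> (c + s))"
      by (rule sum.cong) (simp_all add: cnt_fps Dk_def \<phi>_def add.commute)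
    finally show ?thesis by (simp add: holteT_def)
  qed
  have "(\<Sum>c<k. uvec k j c * holteT k N c c') = (\<Sum>c<k. sj * P $ c * ((\<Sum>s<k*N. Dk $ s * \<phi> (c + s)) / real N ^ k))"
    by (rule sum.cong) (simp_all add: hT uvec_Pf[OF jk] sj_def P_def)
  also have "\<dots> = sj / real N ^ k * (\<Sum>c<k. \<Sum>s<k*N. P $ c * Dk $ s * \<phi> (c + s))"
    by (simp add: sum_distrib_left sum_divide_distrib mult_ac)
  also have "(\<Sum>c<k. \<Sum>s<k*N. P $ c * Dk $ s * \<phi> (c + s)) = (\<Sum>t<k + k*N. (P * Dk) $ t * \<phi> t)"
  proof (rule conv_sum)
    show "\<forall>c\<ge>k. P $ c = 0" using Pf_zero[OF jk] by (simp add: P_def)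
    show "\<forall>s\<ge>k*N. Dk $ s = 0"
      using Lset_empty k2 by (simp add: Dk_def cnt_fps[symmetric])
  qed
  also have "\<dots> = (\<Sum>t\<in>{c'*N..<c'*N+N}. (P * Dk) $ t)"
  proof -
    have "(\<Sum>t<k + k*N. (P * Dk) $ t * \<phi> t) = (\<Sum>t<k + k*N. if t div N = c' then (P * Dk) $ t else 0)"
      by (rule sum.cong) (simp_all add: \<phi>_def)
    also have "\<dots> = (\<Sum>t\<in>{t\<in>{..<k + k*N}. t div N = c'}. (P * Dk) $ t)"
      by (rule sum.inter_filter[symmetric]) simp
    also have "{t\<in>{..<k + k*N}. t div N = c'} = {c'*N..<c'*N+N}"
    proof -
      have "c' * N + N \<le> k * N" using ck by (metis Suc_leI add.commute mult_Suc mult_le_mono1)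
      then show ?thesis using div_window[OF N0] by auto
    qed
    finally show ?thesis .
  qed
  also have "\<dots> = (\<Sum>t\<in>{c'*N..<c'*N+N}. Wf N k e (Suc t) - Wf N k e t)"
  proof (rule sum.cong)
    fix t
    have "P * Dk = (1 - fps_X) * ((1 - fps_X ^ N) ^ k * Ff e)"
    proof -
      have "(1 - fps_X ^ N :: real fps) = (1 - fps_X) * Dg N"
        unfolding Dg_def by (rule one_diff_power_eq)
      then show ?thesis
        by (simp add: P_def Pf_def Dk_def e_def power_mult_distrib mult_ac)
    qed
    then show "(P * Dk) $ t = Wf N k e (Suc t) - Wf N k e t"
      by (simp only: coeff_diffX coeff_W[OF e1])
  qed simp
  also have "\<dots> = Wf N k e (c'*N+N) - Wf N k e (c'*N)"
    by (rule sum_Suc_diff') simp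
  also have "\<dots> = real N ^ e * (Wf 1 k e (Suc c') - Wf 1 k e c')"
    using W_scale[of N k e "Suc c'"] W_scale[of N k e c'] by (simp add: algebra_simps)
  finally have L: "(\<Sum>c<k. uvec k j c * holteT k N c c') =
      sj / real N ^ k * (real N ^ e * (Wf 1 k e (Suc c') - Wf 1 k e c'))" .
  have "P = (1 - fps_X) * ((1 - fps_X ^ 1) ^ k * Ff e)"
    by (simp add: P_def Pf_def e_def)
  then have "P $ c' = Wf 1 k e (Suc c') - Wf 1 k e c'"
    by (simp only: coeff_diffX coeff_W[OF e1])
  then have R: "uvec k j c' = sj * (Wf 1 k e (Suc c') - Wf 1 k e c')"
    by (simp add: uvec_Pf[OF jk] sj_def P_def)
  have Nk: "real N ^ k = real N ^ e * real N ^ j"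
    using jk by (simp add: e_def power_add[symmetric])
  show ?thesis unfolding L R Nk using N0 by (simp add: field_simps)
qed





lemma poch_binom: "pochhammer (real m + 1) k = fact k * real (m + k choose k)"
proof (induction k)
  case 0 then show ?case by simp
next
  case (Suc k)
  have b: "real (Suc (m + k)) * real (m + k choose k) = real (Suc (m + k) choose Suc k) * real (Suc k)"
    using Suc_times_binomial_eq[of "m + k" k] by (metis of_nat_mult)
  have "pochhammer (real m + 1) (Suc k) = fact k * real (m + k choose k) * (real m + 1 + real k)"
    by (simp add: pochhammer_Suc Suc.IH)
  also have "\<dots> = fact k * (real (Suc (m + k)) * real (m + k choose k))" by (simp add: algebra_simps)
  also have "\<dots> = fact (Suc k) * real (m + Suc k choose Suc k)" unfolding b by (simp add: algebra_simps)
  finally show ?case .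
qed

definition Bf :: "nat \<Rightarrow> real fps" where "Bf k = Abs_fps (\<lambda>m. real (m + k choose k))"

lemma Bf_step: "(1 - fps_X) * Bf (Suc k) = Bf k"
proof (rule fps_ext)
  fix m show "((1 - fps_X) * Bf (Suc k)) $ m = Bf k $ m"
  proof (cases m)
    case 0 then show ?thesis by (simp add: Bf_def algebra_simps)
  next
    case (Suc q)
    have "Suc q + Suc k choose Suc k = (q + Suc k choose Suc k) + (q + k + 1 choose k)"
      by simp
    then show ?thesis using Suc by (simp add: Bf_def algebra_simps)
  qed
qed

lemma Bf_inv: "(1 - fps_X) ^ Suc k * Bf k = 1"
proof (induction k)
  case 0
  show ?case
  proof (rule fps_ext)
    fix m show "((1 - fps_X) ^ Suc 0 * Bf 0) $ m = (1::real fps) $ m"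
      by (cases m) (simp_all add: Bf_def algebra_simps)
  qed
next
  case (Suc k)
  have "(1 - fps_X) ^ Suc (Suc k) * Bf (Suc k) = (1 - fps_X) ^ Suc k * ((1 - fps_X) * Bf (Suc k))"
    by (simp only: power_Suc mult_ac)
  also have "\<dots> = 1" unfolding Bf_step by (rule Suc.IH)
  finally show ?case .
qed

lemma stirling_sum:
  assumes "k \<ge> 1"
  shows "(\<Sum>j<k. real (stirling k (k - j)) * x ^ (k - j)) = pochhammer (x::real) k"
proof -
  have "(\<Sum>j<k. real (stirling k (k - j)) * x ^ (k - j)) = (\<Sum>l\<in>{1..k}. real (stirling k l) * x ^ l)"
    by (rule sum.reindex_bij_witness[where i="\<lambda>l. k - l" and j="\<lambda>j. k - j"]) auto
  also have "\<dots> = (\<Sum>l\<le>k. real (stirling k l) * x ^ l)"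
  proof -
    have "{..k} = insert 0 {1..k}" by auto
    then show ?thesis using assms by simp
  qed
  also have "\<dots> = pochhammer x k" by (rule stirling_pochhammer)
  finally show ?thesis .
qed

lemma sum_uvec:
  assumes "k \<ge> 1"
  shows "(\<Sum>j<k. uvec k j i) = (if i = 0 then 1 else 0)"
proof -
  define sj where "sj j = real (stirling k (k - j)) / fact k" for j
  have "(\<Sum>j<k. fps_const (sj j) * Ff (k - j)) = Bf k"
  proof (rule fps_ext)
    fix m
    have "(\<Sum>j<k. fps_const (sj j) * Ff (k - j)) $ m = (\<Sum>j<k. real (stirling k (k - j)) * (real m + 1) ^ (k - j)) / fact k"
      by (simp add: fps_sum_nth sj_def Ff_def sum_divide_distrib add.commute)
    also have "\<dots> = real (m + k choose k)"
      using stirling_sum[OF assms, of "real m + 1"] poch_binom[of m k] by simp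
    finally show "(\<Sum>j<k. fps_const (sj j) * Ff (k - j)) $ m = Bf k $ m" by (simp add: Bf_def)
  qed
  then have "(1 - fps_X) ^ Suc k * (\<Sum>j<k. fps_const (sj j) * Ff (k - j)) = 1"
    by (simp only: Bf_inv)
  then have "((1 - fps_X) ^ Suc k * (\<Sum>j<k. fps_const (sj j) * Ff (k - j))) $ i = (if i = 0 then 1 else 0)"
    by simp
  moreover have "((1 - fps_X) ^ Suc k * (\<Sum>j<k. fps_const (sj j) * Ff (k - j))) $ i = (\<Sum>j<k. uvec k j i)"
  proof -
    have "((1 - fps_X) ^ Suc k * (\<Sum>j<k. fps_const (sj j) * Ff (k - j))) =
        (\<Sum>j<k. fps_const (sj j) * Pf k j)"
      by (simp add: sum_distrib_left Pf_def mult_ac)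
    then show ?thesis
      by (simp add: fps_sum_nth uvec_Pf sj_def)
  qed
  ultimately show ?thesis by simp
qed

lemma uvec_0: "k \<ge> 1 \<Longrightarrow> uvec k 0 i = real (eulerian k (int i)) / fact k"
  by (simp add: uvec_def)

lemma eulerian_1: "eulerian 1 x = (if x = 0 then 1 else 0)"
proof (cases "x < 0")
  case True then show ?thesis by (simp add: eulerian_def)
next
  case False
  then obtain d where d: "x = int d" by (metis nonneg_int_cases not_less)
  have "real (E 1 d) = (if d = 0 then 1 else 0)"
    using E_rec[of 0 d] by (simp add: E_0)
  then have "E 1 d = (if d = 0 then 1 else 0)" by (simp split: if_splits)
  then show ?thesis using eulerian_E[of 1 d] d by simp
qed

lemma uvec_last:
  assumes "k \<ge> 1" "i < k"
  shows "uvec k (k - 1) i = (-1) ^ i * real ((k - 1) choose i) / real k"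
proof -
  have s: "stirling k (k - (k - 1)) = fact (k - 1)"
    using assms stirling_Suc_n_1[of "k - 1"] by simp
  have "(\<Sum>m=0..k-1. real ((k-1) choose m) * (-1) ^ m * real (eulerian (k - (k-1)) (int i - int m)))
      = (\<Sum>m=0..k-1. if m = i then real ((k-1) choose m) * (-1) ^ m else 0)"
    by (rule sum.cong) (use assms in \<open>auto simp: eulerian_1[unfolded One_nat_def]\<close>)
  also have "\<dots> = real ((k-1) choose i) * (-1) ^ i"
    using assms by (simp add: sum.delta)
  finally have S: "(\<Sum>m=0..k-1. real ((k-1) choose m) * (-1) ^ m * real (eulerian (k - (k-1)) (int i - int m)))
      = real ((k-1) choose i) * (-1) ^ i" .
  have f: "fact k = real k * fact (k - 1)"
    using assms by (metis fact_Suc Suc_diff_1 less_le_trans zero_less_one of_nat_fact)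
  show ?thesis unfolding uvec_def S s using assms by (simp add: f field_simps)
qed



lemma orth:
  assumes k2: "k \<ge> 2" and N2: "N \<ge> 2" and mk: "m < k" and jk: "j < k"
    and ev: "\<forall>c<k. (\<Sum>c'<k. holteT k N c c' * v c') = v c / real N ^ j"
  shows "(\<Sum>i<k. uvec k m i * v i) = (if m = j then v 0 else 0)"
proof -
  have key: "(\<Sum>i<k. uvec k m' i * v i) = 0" if m'k: "m' < k" and ne: "m' \<noteq> j" for m'
  proof -
    let ?S = "\<Sum>i<k. uvec k m' i * v i"
    have "?S / real N ^ j = (\<Sum>i<k. uvec k m' i * (v i / real N ^ j))"
      by (simp add: sum_divide_distrib)
    also have "\<dots> = (\<Sum>i<k. uvec k m' i * (\<Sum>c'<k. holteT k N i c' * v c'))"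
      using ev by simp
    also have "\<dots> = (\<Sum>i<k. \<Sum>c'<k. uvec k m' i * holteT k N i c' * v c')"
      by (simp add: sum_distrib_left mult.assoc)
    also have "\<dots> = (\<Sum>c'<k. \<Sum>i<k. uvec k m' i * holteT k N i c' * v c')"
      by (rule sum.swap)
    also have "\<dots> = (\<Sum>c'<k. (\<Sum>i<k. uvec k m' i * holteT k N i c') * v c')"
      by (simp add: sum_distrib_right)
    also have "\<dots> = (\<Sum>c'<k. uvec k m' c' / real N ^ m' * v c')"
      by (rule sum.cong) (simp_all add: left_eigen[OF k2 N2 m'k])
    also have "\<dots> = ?S / real N ^ m'"
      by (simp add: sum_divide_distrib)
    finally have eq: "?S / real N ^ j = ?S / real N ^ m'" .
    have "real N ^ j \<noteq> real N ^ m'"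
    proof
      assume "real N ^ j = real N ^ m'"
      then have "N ^ j = N ^ m'" by (metis of_nat_eq_iff of_nat_power)
      then show False using ne N2 by (simp add: power_inject_exp)
    qed
    then show ?thesis using eq N2 by (auto simp: field_simps)
  qed
  show ?thesis
  proof (cases "m = j")
    case False then show ?thesis using key[OF mk] by simp
  next
    case True
    have "(\<Sum>i<k. uvec k m i * v i) = (\<Sum>m'<k. \<Sum>i<k. uvec k m' i * v i)"
    proof -
      have "(\<Sum>m'<k. \<Sum>i<k. uvec k m' i * v i) = (\<Sum>m'<k. if m' = m then (\<Sum>i<k. uvec k m i * v i) else 0)"
        by (rule sum.cong) (use key True in auto)
      also have "\<dots> = (\<Sum>i<k. uvec k m i * v i)" using mk by (simp add: sum.delta)
      finally show ?thesis by simp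
    qed
    also have "\<dots> = (\<Sum>i<k. \<Sum>m'<k. uvec k m' i * v i)"
      by (rule sum.swap)
    also have "\<dots> = (\<Sum>i<k. (\<Sum>m'<k. uvec k m' i) * v i)"
      by (simp add: sum_distrib_right)
    also have "\<dots> = (\<Sum>i<k. (if i = 0 then 1 else 0) * v i)"
      by (rule sum.cong) (use k2 sum_uvec in auto)
    also have "\<dots> = (\<Sum>i<k. if i = 0 then v i else 0)" by (rule sum.cong) auto
    also have "\<dots> = v 0" using k2 by (subst sum.delta) auto
    finally show ?thesis using True by simp
  qed
qed

theorem mainTheorem3:
  fixes k N :: nat
  assumes "k \<ge> 2" and "N \<ge> 2"
  shows "(\<forall>j<k. \<forall>c'<k.
            (\<Sum>c<k. uvec k j c * holteT k N c c') = uvec k j c' / real N ^ j)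
       \<and> (\<forall>m<k. \<forall>j<k. \<forall>v :: nat \<Rightarrow> real.
            (\<forall>c<k. (\<Sum>c'<k. holteT k N c c' * v c') = v c / real N ^ j) \<and> v 0 = 1
            \<longrightarrow> (\<Sum>i<k. uvec k m i * v i) = (if m = j then 1 else 0))
       \<and> (\<forall>i<k. uvec k 0 i = real (eulerian k (int i)) / fact k)
       \<and> (\<forall>i<k. uvec k (k - 1) i = (-1) ^ i * real ((k - 1) choose i) / real k)"
proof (intro conjI allI impI)
  fix j c' assume "j < k" "c' < k"
  then show "(\<Sum>c<k. uvec k j c * holteT k N c c') = uvec k j c' / real N ^ j"
    using left_eigen assms by blast
next
  fix m j and v :: "nat \<Rightarrow> real"
  assume "m < k" "j < k" "(\<forall>c<k. (\<Sum>c'<k. holteT k N c c' * v c') = v c / real N ^ j) \<and> v 0 = 1"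
  then show "(\<Sum>i<k. uvec k m i * v i) = (if m = j then 1 else 0)"
    using orth[OF assms, of m j v] by simp
next
  fix i assume "i < k"
  then show "uvec k 0 i = real (eulerian k (int i)) / fact k" using uvec_0 assms by simp
next
  fix i assume "i < k"
  then show "uvec k (k - 1) i = (-1) ^ i * real ((k - 1) choose i) / real k"
    using uvec_last assms by simp
qed

end
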